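(* Let $T$ be an infinite, locally finite tree (connected acyclic graph). Then $T$ has finite metric dimension if and only if the set of vertices of $T$ of degree at least three is finite.
   Context: $d$ denotes shortest-path distance. A vertex $x$ resolves $u,v$ if $d(u,x)\ne d(v,x)$; a set $S$ of vertices is a resolving set if every pair of distinct vertices is resolved by some vertex of $S$. The metric dimension $\beta(G)$ is the minimum cardinality of a resolving set if a finite one exists, and $\infty$ otherwise. *)

theory Defs
  imports Main "HOL-Library.Extended_Nat"
begin

definition graph :: "'a set \<Rightarrow> ('a \<Rightarrow> 'a \<Rightarrow> bool) \<Rightarrow> bool" where
  "graph V E \<longleftrightarrow> (\<forall>x y. E x y \<longrightarrow> x \<in> V \<and> y \<in> V \<and> E y x \<and> x \<noteq> y)"

fun walk :: "('a \<Rightarrow> 'a \<Rightarrow> bool) \<Rightarrow> 'a list \<Rightarrow> bool" where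
  "walk E [] = False"
| "walk E [x] = True"
| "walk E (x # y # xs) = (E x y \<and> walk E (y # xs))"

definition connected_graph :: "'a set \<Rightarrow> ('a \<Rightarrow> 'a \<Rightarrow> bool) \<Rightarrow> bool" where
  "connected_graph V E \<longleftrightarrow>
     (\<forall>u\<in>V. \<forall>v\<in>V. \<exists>xs. walk E xs \<and> hd xs = u \<and> last xs = v)"

definition is_cycle :: "('a \<Rightarrow> 'a \<Rightarrow> bool) \<Rightarrow> 'a list \<Rightarrow> bool" where
  "is_cycle E xs \<longleftrightarrow> length xs \<ge> 3 \<and> distinct xs \<and> walk E xs \<and> E (last xs) (hd xs)"

definition acyclic_graph :: "('a \<Rightarrow> 'a \<Rightarrow> bool) \<Rightarrow> bool" where
  "acyclic_graph E \<longleftrightarrow> \<not> (\<exists>xs. is_cycle E xs)"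

definition tree :: "'a set \<Rightarrow> ('a \<Rightarrow> 'a \<Rightarrow> bool) \<Rightarrow> bool" where
  "tree V E \<longleftrightarrow> graph V E \<and> V \<noteq> {} \<and> connected_graph V E \<and> acyclic_graph E"

definition neighbours :: "('a \<Rightarrow> 'a \<Rightarrow> bool) \<Rightarrow> 'a \<Rightarrow> 'a set" where
  "neighbours E v = {u. E v u}"

definition locally_finite :: "'a set \<Rightarrow> ('a \<Rightarrow> 'a \<Rightarrow> bool) \<Rightarrow> bool" where
  "locally_finite V E \<longleftrightarrow> (\<forall>v\<in>V. finite (neighbours E v))"

definition degree :: "('a \<Rightarrow> 'a \<Rightarrow> bool) \<Rightarrow> 'a \<Rightarrow> nat" where
  "degree E v = card (neighbours E v)"

definition dist :: "('a \<Rightarrow> 'a \<Rightarrow> bool) \<Rightarrow> 'a \<Rightarrow> 'a \<Rightarrow> nat" where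
  "dist E u v = (LEAST n. \<exists>xs. walk E xs \<and> hd xs = u \<and> last xs = v \<and> length xs = Suc n)"

definition resolving_set :: "'a set \<Rightarrow> ('a \<Rightarrow> 'a \<Rightarrow> bool) \<Rightarrow> 'a set \<Rightarrow> bool" where
  "resolving_set V E S \<longleftrightarrow> S \<subseteq> V \<and>
     (\<forall>u\<in>V. \<forall>v\<in>V. u \<noteq> v \<longrightarrow> (\<exists>x\<in>S. dist E u x \<noteq> dist E v x))"

definition metric_dimension :: "'a set \<Rightarrow> ('a \<Rightarrow> 'a \<Rightarrow> bool) \<Rightarrow> enat" where
  "metric_dimension V E =
     (if \<exists>S. resolving_set V E S \<and> finite S
      then enat (LEAST k. \<exists>S. resolving_set V E S \<and> finite S \<and> card S = k)
      else \<infinity>)"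

end

theory Submission
  imports Defs
begin

lemma walk_Cons: "walk E (x # xs) \<longleftrightarrow> (xs = [] \<or> (E x (hd xs) \<and> walk E xs))"
  by (cases xs) auto

lemma walk_ne: "walk E xs \<Longrightarrow> xs \<noteq> []"
  by auto

lemma walk_append: "walk E (xs @ [x]) \<Longrightarrow> walk E (x # ys) \<Longrightarrow> walk E (xs @ x # ys)"
proof (induction xs)
  case Nil then show ?case by simp
next
  case (Cons a xs)
  then show ?case by (cases xs) (auto simp: walk_Cons)
qed

lemma walk_prefix: "walk E (xs @ ys) \<Longrightarrow> xs \<noteq> [] \<Longrightarrow> walk E xs"
proof (induction xs)
  case Nil then show ?case by simp
next
  case (Cons a xs)
  then show ?case by (cases xs) (auto simp: walk_Cons)
qed

lemma walk_suffix: "walk E (xs @ ys) \<Longrightarrow> ys \<noteq> [] \<Longrightarrow> walk E ys"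
proof (induction xs)
  case Nil then show ?case by simp
next
  case (Cons a xs)
  then show ?case by (auto simp: walk_Cons)
qed

lemma walk_snoc: "walk E xs \<Longrightarrow> E (last xs) y \<Longrightarrow> walk E (xs @ [y])"
proof (induction xs)
  case Nil then show ?case by simp
next
  case (Cons a xs)
  then show ?case by (cases xs) (auto simp: walk_Cons)
qed

lemma walk_rev: "graph V E \<Longrightarrow> walk E xs \<Longrightarrow> walk E (rev xs)"
proof (induction xs)
  case Nil then show ?case by simp
next
  case (Cons a xs)
  show ?case
  proof (cases "xs = []")
    case True then show ?thesis by simp
  next
    case False
    then have "E (hd xs) a" "walk E xs" using Cons.prems by (auto simp: walk_Cons graph_def)
    then show ?thesis using Cons False by (auto intro!: walk_snoc simp: last_rev)
  qed
qed

lemma walk_concat: "walk E xs \<Longrightarrow> walk E ys \<Longrightarrow> last xs = hd ys \<Longrightarrow> walk E (xs @ tl ys)"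
proof (induction xs)
  case Nil then show ?case by simp
next
  case (Cons a xs)
  show ?case
  proof (cases "xs = []")
    case True
    then show ?thesis using Cons by (cases ys) auto
  next
    case False
    then show ?thesis using Cons by (auto simp: walk_Cons)
  qed
qed

lemma walk_in_V: "graph V E \<Longrightarrow> walk E xs \<Longrightarrow> hd xs \<in> V \<Longrightarrow> set xs \<subseteq> V"
proof (induction xs)
  case Nil then show ?case by simp
next
  case (Cons a xs)
  then show ?case by (cases xs) (auto simp: walk_Cons graph_def)
qed

lemma walk_nth: "walk E xs \<Longrightarrow> Suc i < length xs \<Longrightarrow> E (xs ! i) (xs ! Suc i)"
proof (induction xs arbitrary: i)
  case Nil then show ?case by simp
next
  case (Cons a xs)
  then show ?case by (cases i; cases xs) (auto simp: walk_Cons)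
qed

lemma shorten:
  assumes "walk E xs"
  shows "\<exists>ys. walk E ys \<and> distinct ys \<and> hd ys = hd xs \<and> last ys = last xs \<and> set ys \<subseteq> set xs"
  using assms
proof (induction "length xs" arbitrary: xs rule: less_induct)
  case less
  show ?case
  proof (cases "distinct xs")
    case True then show ?thesis using less.prems by blast
  next
    case False
    then obtain as bs cs y where xs: "xs = as @ [y] @ bs @ [y] @ cs"
      using not_distinct_decomp by blast
    have w1: "walk E (as @ [y])" using less.prems xs walk_prefix[of E "as @ [y]"] by auto
    have w2: "walk E (y # cs)" using less.prems xs walk_suffix[of E "as @ [y] @ bs" "y # cs"] by auto
    have w: "walk E (as @ y # cs)" using walk_append[OF w1 w2] .
    have "length (as @ y # cs) < length xs" using xs by simp
    then obtain ys where ys: "walk E ys" "distinct ys" "hd ys = hd (as @ y # cs)"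
      "last ys = last (as @ y # cs)" "set ys \<subseteq> set (as @ y # cs)"
      using less.hyps w by blast
    have "hd (as @ y # cs) = hd xs" using xs by (cases as) auto
    moreover have "last (as @ y # cs) = last xs" using xs by (cases cs) auto
    moreover have "set (as @ y # cs) \<subseteq> set xs" using xs by auto
    ultimately show ?thesis using ys by (intro exI[of _ ys]) auto
  qed
qed

lemma dist_le: "walk E xs \<Longrightarrow> hd xs = u \<Longrightarrow> last xs = v \<Longrightarrow> dist E u v + 1 \<le> length xs"
proof -
  assume a: "walk E xs" "hd xs = u" "last xs = v"
  then have "xs \<noteq> []" by auto
  then have "length xs = Suc (length xs - 1)" by simp
  then have "dist E u v \<le> length xs - 1"
    unfolding dist_def using a by (intro Least_le) blast
  then show ?thesis using \<open>xs \<noteq> []\<close> by (cases xs) auto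
qed

lemma dist_ex:
  assumes "connected_graph V E" "u \<in> V" "v \<in> V"
  shows "\<exists>xs. walk E xs \<and> hd xs = u \<and> last xs = v \<and> length xs = Suc (dist E u v)"
proof -
  obtain xs where xs: "walk E xs" "hd xs = u" "last xs = v"
    using assms unfolding connected_graph_def by blast
  then have "xs \<noteq> []" by auto
  then have "length xs = Suc (length xs - 1)" by simp
  then have "\<exists>n xs. walk E xs \<and> hd xs = u \<and> last xs = v \<and> length xs = Suc n" using xs by blast
  from LeastI_ex[OF this] show ?thesis unfolding dist_def by blast
qed

lemma dist_0[simp]: "dist E u u = 0"
proof -
  have "walk E [u]" by simp
  from dist_le[OF this] show ?thesis by simp
qed

lemma dist_eq0: "connected_graph V E \<Longrightarrow> u \<in> V \<Longrightarrow> v \<in> V \<Longrightarrow> dist E u v = 0 \<Longrightarrow> u = v"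
  using dist_ex[of V E u v] by (auto simp: length_Suc_conv)

lemma dist_adj: "E u v \<Longrightarrow> dist E u v \<le> 1"
proof -
  assume "E u v"
  then have "walk E [u, v]" by simp
  from dist_le[OF this] show ?thesis by simp
qed

lemma dist_sym_le:
  assumes "graph V E" "connected_graph V E" "u \<in> V" "v \<in> V"
  shows "dist E v u \<le> dist E u v"
proof -
  obtain xs where xs: "walk E xs" "hd xs = u" "last xs = v" "length xs = Suc (dist E u v)"
    using dist_ex[OF assms(2-4)] by blast
  then have "xs \<noteq> []" by auto
  have "walk E (rev xs)" using walk_rev[OF assms(1) xs(1)] .
  from dist_le[OF this] show ?thesis using xs \<open>xs \<noteq> []\<close> by (simp add: hd_rev last_rev)
qed

lemma dist_sym:
  "graph V E \<Longrightarrow> connected_graph V E \<Longrightarrow> u \<in> V \<Longrightarrow> v \<in> V \<Longrightarrow> dist E u v = dist E v u"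
  using dist_sym_le[of V E u v] dist_sym_le[of V E v u] by simp

lemma dist_tri:
  assumes "connected_graph V E" "u \<in> V" "v \<in> V" "w \<in> V"
  shows "dist E u w \<le> dist E u v + dist E v w"
proof -
  obtain xs where xs: "walk E xs" "hd xs = u" "last xs = v" "length xs = Suc (dist E u v)"
    using dist_ex[OF assms(1-3)] by blast
  obtain ys where ys: "walk E ys" "hd ys = v" "last ys = w" "length ys = Suc (dist E v w)"
    using dist_ex[OF assms(1,3,4)] by blast
  have w: "walk E (xs @ tl ys)" using walk_concat[OF xs(1) ys(1)] xs ys by simp
  have "xs \<noteq> []" "ys \<noteq> []" using xs ys by auto
  have "hd (xs @ tl ys) = u" using xs \<open>xs \<noteq> []\<close> by simp
  moreover have "last (xs @ tl ys) = w" using xs ys \<open>ys \<noteq> []\<close>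
    by (cases ys) (auto simp: last_append)
  ultimately have "dist E u w + 1 \<le> length (xs @ tl ys)" using dist_le[OF w] by blast
  then show ?thesis using xs ys by simp
qed

lemma geo_distinct:
  assumes "walk E xs" "length xs = Suc (dist E (hd xs) (last xs))"
  shows "distinct xs"
proof (rule ccontr)
  assume nd: "\<not> distinct xs"
  obtain ys where ys: "walk E ys" "distinct ys" "hd ys = hd xs" "last ys = last xs" "set ys \<subseteq> set xs"
    using shorten[OF assms(1)] by blast
  have "length ys = card (set ys)" using ys(2) by (simp add: distinct_card)
  also have "\<dots> \<le> card (set xs)" using ys(5) by (simp add: card_mono)
  also have "\<dots> < length xs" using nd card_length[of xs] distinct_card[of xs]
    by (metis card_distinct le_neq_implies_less)
  finally have "length ys < length xs" .
  moreover have "dist E (hd xs) (last xs) + 1 \<le> length ys" using dist_le[OF ys(1) ys(3) ys(4)] .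
  ultimately show False using assms(2) by simp
qed

lemma sep:
  assumes "graph V E" "connected_graph V E" "x \<in> V" "s \<in> V"
    and all: "\<And>xs. walk E xs \<Longrightarrow> hd xs = x \<Longrightarrow> last xs = s \<Longrightarrow> m \<in> set xs"
  shows "dist E x s = dist E x m + dist E m s"
proof -
  obtain xs where xs: "walk E xs" "hd xs = x" "last xs = s" "length xs = Suc (dist E x s)"
    using dist_ex[OF assms(2-4)] by blast
  have "m \<in> set xs" using all xs by blast
  then obtain i where i: "i < length xs" "xs ! i = m" by (auto simp: in_set_conv_nth)
  have mV: "m \<in> V" using walk_in_V[OF assms(1) xs(1)] xs(2) assms(3) \<open>m \<in> set xs\<close> by auto
  have "xs = take (Suc i) xs @ drop (Suc i) xs" by simp
  then have w1: "walk E (take (Suc i) xs)" using walk_prefix[of E "take (Suc i) xs"] xs(1) by (metis take_eq_Nil nat.distinct(1) walk_ne)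
  have "xs = take i xs @ drop i xs" by simp
  then have w2: "walk E (drop i xs)" using walk_suffix[of E "take i xs" "drop i xs"] xs(1) i by (metis drop_eq_Nil not_le)
  have "hd (take (Suc i) xs) = x" using xs i by (cases xs) auto
  moreover have "last (take (Suc i) xs) = m" using i by (simp add: take_Suc_conv_app_nth)
  ultimately have d1: "dist E x m + 1 \<le> Suc i" using dist_le[OF w1] i by simp
  have "hd (drop i xs) = m" "last (drop i xs) = s" using i xs by (auto simp: hd_drop_conv_nth)
  then have d2: "dist E m s + 1 \<le> length xs - i" using dist_le[OF w2] by simp
  have "dist E x s \<le> dist E x m + dist E m s" using dist_tri[OF assms(2,3) mV assms(4)] .
  then show ?thesis using d1 d2 xs(4) i by linarith
qed

definition br :: "('a \<Rightarrow> 'a \<Rightarrow> bool) \<Rightarrow> 'a \<Rightarrow> 'a \<Rightarrow> 'a set" where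
  "br E m a = {x. \<exists>xs. walk E xs \<and> hd xs = a \<and> last xs = x \<and> m \<notin> set xs}"

lemma L4:
  assumes "tree V E" "E v a" "E v b" "a \<noteq> b" "walk E xs" "hd xs = a" "last xs = b"
  shows "v \<in> set xs"
proof (rule ccontr)
  assume nv: "v \<notin> set xs"
  obtain ys where ys: "walk E ys" "distinct ys" "hd ys = a" "last ys = b" "set ys \<subseteq> set xs"
    using shorten[OF assms(5)] assms by auto
  have "v \<notin> set ys" using nv ys by auto
  have "length ys \<noteq> 1" using ys assms(4) by (auto simp: length_Suc_conv)
  moreover have "ys \<noteq> []" using ys by auto
  ultimately have l: "length ys \<ge> 2" by (cases ys) (auto simp: Suc_le_eq)
  have g: "graph V E" using assms(1) by (simp add: tree_def)
  have "is_cycle E (v # ys)"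
    unfolding is_cycle_def using l ys \<open>v \<notin> set ys\<close> assms(2,3) g
    by (auto simp: walk_Cons graph_def)
  then show False using assms(1) by (auto simp: tree_def acyclic_graph_def)
qed

lemma L5:
  assumes "tree V E" "E m a" "s \<in> br E m a" "walk E xs" "hd xs = m" "last xs = s"
  shows "a \<in> set xs"
proof (rule ccontr)
  assume na: "a \<notin> set xs"
  have g: "graph V E" using assms(1) by (simp add: tree_def)
  obtain W where W: "walk E W" "hd W = a" "last W = s" "m \<notin> set W"
    using assms(3) by (auto simp: br_def)
  have "s \<noteq> m" using W by (metis last_in_set walk_ne)
  obtain ys where ys: "walk E ys" "distinct ys" "hd ys = m" "last ys = s" "set ys \<subseteq> set xs"
    using shorten[OF assms(4)] assms by auto
  obtain c rest where ys2: "ys = m # c # rest"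
    using ys \<open>s \<noteq> m\<close> by (cases ys; cases "tl ys") auto
  have Emc: "E m c" using ys(1) ys2 by simp
  have ca: "c \<noteq> a" using na ys ys2 by auto
  have wc: "walk E (c # rest)" using ys(1) ys2 by simp
  have mn: "m \<notin> set (c # rest)" using ys(2) ys2 by simp
  have wr: "walk E (rev (c # rest))" using walk_rev[OF g wc] .
  have lastcr: "last (c # rest) = s" using ys(4) ys2 by simp
  have h: "last W = hd (rev (c # rest))" using W(3) lastcr by (metis hd_rev)
  have wW: "walk E (W @ tl (rev (c # rest)))" using walk_concat[OF W(1) wr h] .
  have "hd (W @ tl (rev (c # rest))) = a" using W by (cases W) auto
  moreover have "last (W @ tl (rev (c # rest))) = c"
  proof (cases "tl (rev (c # rest)) = []")
    case True
    then have "rev (c # rest) = [c]" by (cases "rev (c # rest)") auto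
    then have "s = c" using lastcr by (metis last_rev list.sel(1) rev_singleton_conv last.simps)
    then show ?thesis using True W by simp
  next
    case False
    then have "last (tl (rev (c # rest))) = c"
      by (metis last_tl last_rev list.sel(1) rev.simps(2) hd_rev list.distinct(1) rev_is_Nil_conv)
    then show ?thesis using False by simp
  qed
  moreover have "m \<notin> set (W @ tl (rev (c # rest)))"
    using W(4) mn by (auto dest: list.set_sel(2)[rotated] simp: rev_is_Nil_conv)
  ultimately have "m \<in> set (W @ tl (rev (c # rest)))"
    using L4[OF assms(1) assms(2) Emc ca[symmetric] wW] by blast
  then show False using \<open>m \<notin> set (W @ tl (rev (c # rest)))\<close> by blast
qed

lemma join:
  assumes "walk E xs" "walk E ys" "last xs = hd ys"
  shows "\<exists>zs. walk E zs \<and> hd zs = hd xs \<and> last zs = last ys \<and> set zs \<subseteq> set xs \<union> set ys"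
proof (intro exI conjI)
  show "walk E (xs @ tl ys)" using walk_concat[OF assms] .
  have ne: "xs \<noteq> []" "ys \<noteq> []" using assms by auto
  then show "hd (xs @ tl ys) = hd xs" by simp
  show "last (xs @ tl ys) = last ys"
    using ne assms(3) by (cases ys) (auto simp: last_append)
  show "set (xs @ tl ys) \<subseteq> set xs \<union> set ys" using ne by (cases ys) auto
qed

lemma rev_walk:
  assumes "graph V E" "walk E xs"
  shows "walk E (rev xs) \<and> hd (rev xs) = last xs \<and> last (rev xs) = hd xs \<and> set (rev xs) = set xs"
  using walk_rev[OF assms] assms(2) by (auto simp: hd_rev last_rev)

lemma adj_notbr:
  assumes "tree V E" "E m a" "s \<in> V" "s \<notin> br E m a"
  shows "dist E a s = dist E m s + 1"
proof -
  have g: "graph V E" and c: "connected_graph V E" using assms(1) by (auto simp: tree_def)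
  have mV: "m \<in> V" "a \<in> V" "E a m" "a \<noteq> m" using g assms(2) by (auto simp: graph_def)
  have "dist E a s = dist E a m + dist E m s"
    by (rule sep[OF g c mV(2) assms(3)]) (use assms(4) in \<open>auto simp: br_def\<close>)
  moreover have "dist E a m = 1"
    using dist_adj[of E a m, OF mV(3)] dist_eq0[OF c mV(2) mV(1)] mV(4) by linarith
  ultimately show ?thesis by simp
qed

lemma adj_br:
  assumes "tree V E" "E m a" "s \<in> V" "s \<in> br E m a"
  shows "dist E m s = dist E a s + 1"
proof -
  have g: "graph V E" and c: "connected_graph V E" using assms(1) by (auto simp: tree_def)
  have mV: "m \<in> V" "a \<in> V" "m \<noteq> a" using g assms(2) by (auto simp: graph_def)
  have "dist E m s = dist E m a + dist E a s"
    by (rule sep[OF g c mV(1) assms(3)]) (use L5[OF assms(1,2,4)] in auto)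
  moreover have "dist E m a = 1"
    using dist_adj[of E m a, OF assms(2)] dist_eq0[OF c mV(1) mV(2)] mV(3) by linarith
  ultimately show ?thesis by simp
qed

lemma adj_dist:
  assumes "tree V E" "E m a" "s \<in> V"
  shows "dist E a s = dist E m s + 1 \<or> dist E m s = dist E a s + 1"
  using adj_br[OF assms] adj_notbr[OF assms] by blast

lemma walk_parity:
  assumes "tree V E" "s \<in> V"
  shows "walk E xs \<Longrightarrow> hd xs \<in> V \<Longrightarrow> even (dist E (hd xs) s + dist E (last xs) s + length xs + 1)"
proof (induction xs)
  case Nil then show ?case by simp
next
  case (Cons x xs)
  show ?case
  proof (cases "xs = []")
    case True then show ?thesis by simp
  next
    case False
    have g: "graph V E" using assms(1) by (simp add: tree_def)
    have e: "E x (hd xs)" "walk E xs" using Cons.prems False by (auto simp: walk_Cons)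
    then have "hd xs \<in> V" using g by (auto simp: graph_def)
    then have IH: "even (dist E (hd xs) s + dist E (last xs) s + length xs + 1)" using Cons.IH e by blast
    have "dist E (hd xs) s = dist E x s + 1 \<or> dist E x s = dist E (hd xs) s + 1"
      using adj_dist[OF assms(1) e(1) assms(2)] .
    then show ?thesis using IH False by auto
  qed
qed

lemma mid_resolve:
  assumes T: "tree V E" and p: "walk E p" "length p = Suc (dist E (hd p) (last p))"
    and j: "length p = 2*j+1" "j \<ge> 1" and u: "hd p \<in> V" and s: "s \<in> V"
    and sb: "s \<in> br E (p!j) (p!(j-1))"
  shows "dist E (hd p) s < dist E (last p) s"
proof -
  have g: "graph V E" and c: "connected_graph V E" using T by (auto simp: tree_def)
  have pV: "set p \<subseteq> V" using walk_in_V[OF g p(1) u] .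
  have dp: "distinct p" using geo_distinct[OF p] .
  define m a b where "m = p!j" and "a = p!(j-1)" and "b = p!(j+1)"
  have idx: "j - 1 < length p" "j < length p" "j + 1 < length p" using j by auto
  have lV: "last p \<in> V" using pV p(1) by (metis last_in_set walk_ne subsetD)
  have V3: "m \<in> V" "a \<in> V" "b \<in> V" "last p \<in> V"
    using pV idx lV unfolding m_def a_def b_def by auto
  have "E (p!(j-1)) (p!Suc (j-1))" using walk_nth[OF p(1), of "j-1"] idx j by simp
  then have Ema: "E m a" using g j unfolding m_def a_def by (auto simp: graph_def)
  have Emb: "E m b" using walk_nth[OF p(1), of j] idx unfolding m_def b_def by simp
  have ab: "a \<noteq> b" using dp idx unfolding a_def b_def by (simp add: nth_eq_iff_index_eq)
  have "p = take j p @ drop j p" by simp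
  then have wt: "walk E (take j p)" using walk_prefix[of E "take j p" "drop j p"] p(1) j
    by (metis append_take_drop_id take_eq_Nil walk_ne not_one_le_zero)
  have "take j p = take (Suc (j-1)) p" using j by simp
  then have "last (take j p) = a" using idx unfolding a_def by (simp add: take_Suc_conv_app_nth)
  moreover have "hd (take j p) = hd p" using j by (cases p) auto
  ultimately have dua: "dist E (hd p) a \<le> j - 1" using dist_le[OF wt] idx by fastforce
  have "p = take (Suc j) p @ drop (Suc j) p" by simp
  then have wt2: "walk E (take (Suc j) p)" using walk_prefix[of E "take (Suc j) p"] p(1) by (metis Zero_not_Suc take_eq_Nil walk_ne)
  have "last (take (Suc j) p) = m" using idx unfolding m_def by (simp add: take_Suc_conv_app_nth)
  moreover have "hd (take (Suc j) p) = hd p" by (cases p) auto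
  ultimately have dum: "dist E (hd p) m \<le> j" using dist_le[OF wt2] idx by fastforce
  have das: "dist E m s = dist E a s + 1" using adj_br[OF T Ema s] sb unfolding m_def a_def by simp
  have "dist E (hd p) s \<le> dist E (hd p) a + dist E a s" using dist_tri[OF c u V3(2) s] .
  then have A: "dist E (hd p) s \<le> j - 1 + dist E a s" using dua by linarith
  have "dist E (hd p) (last p) \<le> dist E (hd p) m + dist E m (last p)"
    using dist_tri[OF c u V3(1) V3(4)] .
  then have "j \<le> dist E m (last p)" using dum p(2) j by linarith
  then have dwm: "j \<le> dist E (last p) m" using dist_sym[OF g c V3(1) V3(4)] by simp
  have "p = take (j+1) p @ drop (j+1) p" by simp
  then have wq: "walk E (drop (j+1) p)" using walk_suffix[of E "take (j+1) p" "drop (j+1) p"] p(1) idx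
    by (metis drop_eq_Nil not_le)
  have hq: "hd (drop (j+1) p) = b" "last (drop (j+1) p) = last p"
    using idx unfolding b_def by (auto simp: hd_drop_conv_nth)
  have mq: "m \<notin> set (drop (j+1) p)"
  proof
    assume "m \<in> set (drop (j+1) p)"
    then obtain k where k: "k < length p - (j+1)" "drop (j+1) p ! k = m" by (auto simp: in_set_conv_nth)
    then have "p ! (j+1+k) = p ! j" unfolding m_def using idx by simp
    then show False using dp k idx by (simp add: nth_eq_iff_index_eq)
  qed
  have "dist E (last p) s = dist E (last p) m + dist E m s"
  proof (rule sep[OF g c V3(4) s])
    fix W assume W: "walk E W" "hd W = last p" "last W = s"
    show "m \<in> set W"
    proof (rule ccontr)
      assume mW: "m \<notin> set W"
      obtain W1 where W1: "walk E W1" "hd W1 = a" "last W1 = s" "m \<notin> set W1"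
        using sb unfolding br_def m_def a_def by auto
      have rW: "walk E (rev W)" "hd (rev W) = s" "last (rev W) = last p" "set (rev W) = set W"
        using rev_walk[OF g W(1)] W by auto
      obtain X where X: "walk E X" "hd X = a" "last X = last p" "set X \<subseteq> set W1 \<union> set W"
        using join[OF W1(1) rW(1)] W1 rW by auto
      have rq: "walk E (rev (drop (j+1) p))" "hd (rev (drop (j+1) p)) = last p"
        "last (rev (drop (j+1) p)) = b" "set (rev (drop (j+1) p)) = set (drop (j+1) p)"
        using rev_walk[OF g wq] hq by auto
      obtain Y where Y: "walk E Y" "hd Y = a" "last Y = b" "set Y \<subseteq> set X \<union> set (drop (j+1) p)"
        using join[OF X(1) rq(1)] X rq by auto
      have "m \<in> set Y" using L4[OF T Ema Emb ab Y(1-3)] .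
      then show False using Y(4) X(4) mq W1(4) mW by auto
    qed
  qed
  then have "dist E (last p) s \<ge> j + dist E a s + 1" using dwm das by linarith
  then show ?thesis using A j by linarith
qed

definition good :: "'a set \<Rightarrow> ('a \<Rightarrow> 'a \<Rightarrow> bool) \<Rightarrow> 'a set \<Rightarrow> bool" where
  "good V E S \<longleftrightarrow> (\<forall>m\<in>V. \<forall>a b. E m a \<longrightarrow> E m b \<longrightarrow> a \<noteq> b \<longrightarrow>
      (\<exists>s\<in>S. s \<in> br E m a \<or> s \<in> br E m b))"

lemma good_resolving:
  assumes T: "tree V E" and S: "S \<subseteq> V" "S \<noteq> {}" and gd: "good V E S"
  shows "resolving_set V E S"
  unfolding resolving_set_def
proof (intro conjI ballI impI)
  show "S \<subseteq> V" by fact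
  fix u w assume u: "u \<in> V" and w: "w \<in> V" and uw: "u \<noteq> w"
  have g: "graph V E" and c: "connected_graph V E" using T by (auto simp: tree_def)
  obtain p where p: "walk E p" "hd p = u" "last p = w" "length p = Suc (dist E u w)"
    using dist_ex[OF c u w] by blast
  have k1: "dist E u w \<noteq> 0" using dist_eq0[OF c u w] uw by blast
  show "\<exists>x\<in>S. dist E u x \<noteq> dist E w x"
  proof (cases "even (dist E u w)")
    case False
    obtain s where s: "s \<in> S" using S by blast
    then have sV: "s \<in> V" using S by blast
    have "even (dist E (hd p) s + dist E (last p) s + length p + 1)"
      using walk_parity[OF T sV p(1)] p u by simp
    then have "dist E u s \<noteq> dist E w s" using p False by auto
    then show ?thesis using s by blast
  next
    case True
    then obtain j where j: "dist E u w = 2 * j" by blast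
    then have j1: "j \<ge> 1" using k1 by simp
    have lp: "length p = 2*j+1" using p j by simp
    have pV: "set p \<subseteq> V" using walk_in_V[OF g p(1)] p u by simp
    have idx: "j - 1 < length p" "j < length p" "j + 1 < length p" using lp j1 by auto
    have "E (p!(j-1)) (p!Suc (j-1))" using walk_nth[OF p(1), of "j-1"] idx j1 by simp
    then have Ema: "E (p!j) (p!(j-1))" using g j1 by (auto simp: graph_def)
    have Emb: "E (p!j) (p!(j+1))" using walk_nth[OF p(1), of j] idx by simp
    have dp: "distinct p" using geo_distinct[OF p(1)] p by simp
    have ab: "p!(j-1) \<noteq> p!(j+1)" using dp idx by (simp add: nth_eq_iff_index_eq)
    have mV: "p!j \<in> V" using pV idx by auto
    obtain s where s: "s \<in> S" "s \<in> br E (p!j) (p!(j-1)) \<or> s \<in> br E (p!j) (p!(j+1))"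
      using gd mV Ema Emb ab unfolding good_def by blast
    have sV: "s \<in> V" using s S by blast
    from s(2) show ?thesis
    proof
      assume sb: "s \<in> br E (p!j) (p!(j-1))"
      have "dist E (hd p) s < dist E (last p) s"
        using mid_resolve[OF T p(1) _ lp j1 _ sV sb] p u by simp
      then have "dist E u s \<noteq> dist E w s" using p by simp
      then show ?thesis using s(1) by blast
    next
      assume sb: "s \<in> br E (p!j) (p!(j+1))"
      have r: "walk E (rev p)" "hd (rev p) = w" "last (rev p) = u"
        using rev_walk[OF g p(1)] p by auto
      have lr: "length (rev p) = Suc (dist E (hd (rev p)) (last (rev p)))"
        using r p dist_sym[OF g c u w] by simp
      have "rev p ! j = p ! j" using idx lp by (simp add: rev_nth)
      moreover have "rev p ! (j-1) = p ! (j+1)" using idx lp j1 by (simp add: rev_nth)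
      ultimately have sb': "s \<in> br E (rev p ! j) (rev p ! (j-1))" using sb by simp
      have "dist E (hd (rev p)) s < dist E (last (rev p)) s"
        using mid_resolve[OF T r(1) lr _ j1 _ sV sb'] lp r w by simp
      then have "dist E u s \<noteq> dist E w s" using r by simp
      then show ?thesis using s(1) by blast
    qed
  qed
qed

lemma backward:
  assumes T: "tree V E" and inf: "infinite V" and lf: "locally_finite V E"
    and fin: "finite {v \<in> V. degree E v \<ge> 3}"
  shows "\<exists>S. resolving_set V E S \<and> finite S"
proof -
  define B where "B = {v \<in> V. degree E v \<ge> 3}"
  have g: "graph V E" and c: "connected_graph V E" using T by (auto simp: tree_def)
  obtain x0 where x0: "x0 \<in> V" using inf by (metis finite.emptyI ex_in_conv)
  have "infinite (V - {x0})" using inf by simp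
  then obtain x1 where x1: "x1 \<in> V" "x1 \<noteq> x0" by (metis Diff_iff ex_in_conv finite.emptyI insertI1)
  define S where "S = (\<Union>m\<in>B. neighbours E m) \<union> {x0, x1}"
  have finS: "finite S" unfolding S_def using fin lf unfolding B_def locally_finite_def by auto
  have SV: "S \<subseteq> V" unfolding S_def B_def neighbours_def using g x0 x1 by (auto simp: graph_def)
  have gd: "good V E S" unfolding good_def
  proof (intro ballI allI impI)
    fix m a b assume m: "m \<in> V" and Ema: "E m a" and Emb: "E m b" and ab: "a \<noteq> b"
    show "\<exists>s\<in>S. s \<in> br E m a \<or> s \<in> br E m b"
    proof (cases "m \<in> B")
      case True
      then have "a \<in> S" unfolding S_def neighbours_def using Ema by auto
      moreover have "a \<in> br E m a" unfolding br_def using Ema g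
        by (intro CollectI exI[of _ "[a]"]) (auto simp: graph_def)
      ultimately show ?thesis by blast
    next
      case False
      have fn: "finite (neighbours E m)" using lf m by (simp add: locally_finite_def)
      have sub: "{a, b} \<subseteq> neighbours E m" using Ema Emb by (simp add: neighbours_def)
      have "card (neighbours E m) \<le> 2" using False m unfolding B_def degree_def by simp
      moreover have "card {a, b} = 2" using ab by simp
      ultimately have nb: "neighbours E m = {a, b}"
        using card_subset_eq[OF fn sub] card_mono[OF fn sub] by simp
      obtain s where s: "s \<in> S" "s \<noteq> m" using x1 unfolding S_def by auto
      have sV: "s \<in> V" using s SV by auto
      obtain xs where xs: "walk E xs" "hd xs = m" "last xs = s"
        using c m sV unfolding connected_graph_def by blast
      obtain ys where ys: "walk E ys" "distinct ys" "hd ys = m" "last ys = s"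
        using shorten[OF xs(1)] xs by auto
      obtain cc rest where ys2: "ys = m # cc # rest"
        using ys s(2) by (cases ys; cases "tl ys") auto
      have "E m cc" using ys(1) ys2 by simp
      then have "cc = a \<or> cc = b" using nb by (auto simp: neighbours_def)
      moreover have "s \<in> br E m cc" unfolding br_def
        using ys ys2 by (intro CollectI exI[of _ "cc # rest"]) auto
      ultimately show ?thesis using s by blast
    qed
  qed
  have "S \<noteq> {}" unfolding S_def by auto
  then show ?thesis using good_resolving[OF T SV _ gd] finS by blast
qed

lemma forward:
  assumes T: "tree V E" and lf: "locally_finite V E"
    and R: "resolving_set V E S" and finS: "finite S"
  shows "finite {v \<in> V. degree E v \<ge> 3}"
proof (rule ccontr)
  assume infB: "infinite {v \<in> V. degree E v \<ge> 3}"
  have g: "graph V E" and c: "connected_graph V E" using T by (auto simp: tree_def)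
  have SV: "S \<subseteq> V" using R by (simp add: resolving_set_def)
  define W where "W s t = (SOME xs. walk E xs \<and> hd xs = s \<and> last xs = t)" for s t
  have Wp: "walk E (W s t) \<and> hd (W s t) = s \<and> last (W s t) = t" if "s \<in> S" "t \<in> S" for s t
  proof -
    have "\<exists>xs. walk E xs \<and> hd xs = s \<and> last xs = t" using c that SV unfolding connected_graph_def by blast
    then show ?thesis unfolding W_def by (rule someI_ex)
  qed
  define F where "F = S \<union> (\<Union>s\<in>S. \<Union>t\<in>S. set (W s t))"
  have finF: "finite F" unfolding F_def using finS by auto
  have "infinite ({v \<in> V. degree E v \<ge> 3} - F)" using Diff_infinite_finite[OF finF infB] .
  then obtain v where v: "v \<in> V" "degree E v \<ge> 3" "v \<notin> F" by (metis (no_types, lifting) Diff_iff ex_in_conv finite.emptyI mem_Collect_eq)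
  define P where "P a = (\<exists>s\<in>S. s \<in> br E v a)" for a
  have key: False if ab: "E v a" "E v b" "a \<noteq> b" "P a" "P b" for a b
  proof -
    obtain s where s: "s \<in> S" "s \<in> br E v a" using ab(4) unfolding P_def by blast
    obtain t where t: "t \<in> S" "t \<in> br E v b" using ab(5) unfolding P_def by blast
    obtain W1 where W1: "walk E W1" "hd W1 = a" "last W1 = s" "v \<notin> set W1"
      using s unfolding br_def by auto
    obtain W2 where W2: "walk E W2" "hd W2 = b" "last W2 = t" "v \<notin> set W2"
      using t unfolding br_def by auto
    have Wst: "walk E (W s t)" "hd (W s t) = s" "last (W s t) = t" "v \<notin> set (W s t)"
      using Wp[OF s(1) t(1)] v(3) s(1) t(1) unfolding F_def by auto
    obtain X where X: "walk E X" "hd X = a" "last X = t" "set X \<subseteq> set W1 \<union> set (W s t)"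
      using join[OF W1(1) Wst(1)] W1 Wst by auto
    have r: "walk E (rev W2)" "hd (rev W2) = t" "last (rev W2) = b" "set (rev W2) = set W2"
      using rev_walk[OF g W2(1)] W2 by auto
    obtain Y where Y: "walk E Y" "hd Y = a" "last Y = b" "set Y \<subseteq> set X \<union> set (rev W2)"
      using join[OF X(1) r(1)] X r by auto
    have "v \<in> set Y" using L4[OF T ab(1,2,3) Y(1-3)] .
    then show False using Y(4) X(4) W1(4) Wst(4) W2(4) r(4) by auto
  qed
  have fn: "finite (neighbours E v)" using lf v by (simp add: locally_finite_def)
  have "3 \<le> card (neighbours E v)" using v(2) by (simp add: degree_def)
  then obtain N where N: "N \<subseteq> neighbours E v" "card N = 3" by (meson obtain_subset_with_card_n)
  then obtain a1 a2 a3 where a: "N = {a1, a2, a3}" "a1 \<noteq> a2" "a2 \<noteq> a3" "a1 \<noteq> a3"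
    by (auto simp: card_3_iff)
  have E3: "E v a1" "E v a2" "E v a3" using N a by (auto simp: neighbours_def)
  obtain a b where ab: "E v a" "E v b" "a \<noteq> b" "\<not> P a" "\<not> P b"
    using key[OF E3(1) E3(2) a(2)] key[OF E3(1) E3(3) a(4)] key[OF E3(2) E3(3) a(3)] E3 a by metis
  have aV: "a \<in> V" "b \<in> V" using ab g by (auto simp: graph_def)
  then obtain s where s: "s \<in> S" "dist E a s \<noteq> dist E b s" using R ab(3) unfolding resolving_set_def by blast
  have sV: "s \<in> V" using s SV by auto
  have "dist E a s = dist E v s + 1" using adj_notbr[OF T ab(1) sV] ab(4) s(1) unfolding P_def by blast
  moreover have "dist E b s = dist E v s + 1" using adj_notbr[OF T ab(2) sV] ab(5) s(1) unfolding P_def by blast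
  ultimately show False using s(2) by simp
qed

theorem theorem3:
  fixes V :: "'a set" and E :: "'a \<Rightarrow> 'a \<Rightarrow> bool"
  assumes "tree V E" and "infinite V" and "locally_finite V E"
  shows "metric_dimension V E \<noteq> \<infinity> \<longleftrightarrow> finite {v \<in> V. degree E v \<ge> 3}"
proof -
  have "metric_dimension V E \<noteq> \<infinity> \<longleftrightarrow> (\<exists>S. resolving_set V E S \<and> finite S)"
    unfolding metric_dimension_def by simp
  then show ?thesis using forward[OF assms(1,3)] backward[OF assms] by blast
qed

end
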